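(* Let $d\ge 1$ and let $Q=\bigcap_{i=1}^{k}\{x\in\mathbb{R}^d:\langle u_i,x\rangle\le b_i\}$ be a convex polytope whose facets have the $k$ pairwise distinct outward unit normals $u_1,\dots,u_k$. Let $P\subset\mathbb{R}^d$ be a finite set of $n\ge 1$ points. Then there exists $p\in P$ such that $p\in M$ for every homothet $M$ of $Q$ with $|M\cap P|>(1-\frac{1}{k})n$.
   Context: A homothet of $Q$ is a set of the form $\lambda Q+t=\{\lambda x+t: x\in Q\}$ with $\lambda>0$ and $t\in\mathbb{R}^d$. *)

theory Defs
  imports "HOL-Analysis.Analysis"
begin

definition homothet :: "real \<Rightarrow> 'a::real_vector \<Rightarrow> 'a set \<Rightarrow> 'a set" where
  "homothet lam t Q = (\<lambda>x. lam *\<^sub>R x + t) ` Q"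

end

theory Submission
  imports Defs
begin

lemma threshold:
  fixes P :: "'a set" and f :: "'a \<Rightarrow> real" and \<alpha> :: real
  assumes fin: "finite P" and a0: "0 \<le> \<alpha>" and an: "\<alpha> < real (card P)"
  shows "\<exists>c. real (card {p\<in>P. f p \<le> c}) > \<alpha> \<and>
    (\<forall>c'. real (card {p\<in>P. f p \<le> c'}) > \<alpha> \<longrightarrow> c \<le> c')"
proof -
  define S where "S = f ` {p\<in>P. real (card {q\<in>P. f q \<le> f p}) > \<alpha>}"
  have Sfin: "finite S" using fin unfolding S_def by simp
  have Pne: "P \<noteq> {}" using an a0 by auto
  define m where "m = Max (f ` P)"
  have "m \<in> f ` P" unfolding m_def using fin Pne by simp
  then obtain pm where pm: "pm \<in> P" "f pm = m" by auto
  have "{q\<in>P. f q \<le> f pm} = P" using pm fin m_def by auto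
  hence "f pm \<in> S" unfolding S_def using pm an by auto
  hence Sne: "S \<noteq> {}" by auto
  define c where "c = Min S"
  have "c \<in> S" unfolding c_def using Sfin Sne by simp
  then obtain p0 where p0: "p0 \<in> P" "f p0 = c" "real (card {q\<in>P. f q \<le> c}) > \<alpha>"
    unfolding S_def by auto
  show ?thesis
  proof (intro exI conjI allI impI)
    show "real (card {p\<in>P. f p \<le> c}) > \<alpha>" by (rule p0(3))
  next
    fix c' assume h: "real (card {p\<in>P. f p \<le> c'}) > \<alpha>"
    define T where "T = {p\<in>P. f p \<le> c'}"
    have Tfin: "finite T" using fin T_def by simp
    have "T \<noteq> {}" using h a0 T_def by (metis card.empty of_nat_0 not_less)
    hence "Max (f ` T) \<in> f ` T" using Tfin by simp
    then obtain q where q: "q \<in> T" "f q = Max (f ` T)" by auto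
    have "{p\<in>P. f p \<le> f q} = T"
    proof
      show "{p\<in>P. f p \<le> f q} \<subseteq> T" using q T_def by auto
      show "T \<subseteq> {p\<in>P. f p \<le> f q}" using q Tfin T_def by auto
    qed
    hence "real (card {p\<in>P. f p \<le> f q}) > \<alpha>" using h T_def by simp
    moreover have "q \<in> P" using q T_def by simp
    ultimately have "f q \<in> S" unfolding S_def by blast
    hence "c \<le> f q" unfolding c_def using Sfin by simp
    also have "f q \<le> c'" using q T_def by auto
    finally show "c \<le> c'" .
  qed
qed

theorem corollary4:
  fixes Q :: "'a::euclidean_space set"
    and u :: "nat \<Rightarrow> 'a" and b :: "nat \<Rightarrow> real"
    and k :: nat and P :: "'a set" and n :: nat
  assumes Qpoly: "polytope Q"
    and Qint: "interior Q \<noteq> {}"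
    and Qeq: "Q = (\<Inter>i\<in>{..<k}. {x. u i \<bullet> x \<le> b i})"
    and unit: "\<And>i. i < k \<Longrightarrow> norm (u i) = 1"
    and distinct: "inj_on u {..<k}"
    and facets: "{F. F facet_of Q} = (\<lambda>i. Q \<inter> {x. u i \<bullet> x = b i}) ` {..<k}"
    and Pfin: "finite P" and Pcard: "card P = n" and npos: "n \<ge> 1"
  shows "\<exists>p\<in>P. \<forall>lam t. lam > 0 \<and>
            real (card (homothet lam t Q \<inter> P)) > (1 - 1 / real k) * real n
            \<longrightarrow> p \<in> homothet lam t Q"
proof (cases "k = 0")
  case True
  obtain p where "p \<in> P" using npos Pcard by (metis card.empty ex_in_conv not_one_le_zero)
  moreover have "\<And>lam t. real (card (homothet lam t Q \<inter> P)) \<le> real n"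
    using card_mono[OF Pfin] Pcard by (metis inf_le2 of_nat_le_iff)
  ultimately show ?thesis using True by (simp add: not_less) (meson leD)
next
  case False
  define \<alpha> where "\<alpha> = (1 - 1 / real k) * real n"
  have k1: "1 \<le> real k" using False by linarith
  have "1 / real k \<le> 1" using k1 by (simp add: divide_le_eq)
  hence a0: "0 \<le> \<alpha>" unfolding \<alpha>_def by (simp add: mult_nonneg_nonneg)
  have an: "\<alpha> < real (card P)" unfolding \<alpha>_def using False npos Pcard
    by (simp add: field_simps)
  have "\<forall>i. \<exists>c. real (card {p\<in>P. u i \<bullet> p \<le> c}) > \<alpha> \<and>
    (\<forall>c'. real (card {p\<in>P. u i \<bullet> p \<le> c'}) > \<alpha> \<longrightarrow> c \<le> c')"
    using threshold[OF Pfin a0 an] by blast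
  then obtain c where c: "\<And>i. real (card {p\<in>P. u i \<bullet> p \<le> c i}) > \<alpha>"
    "\<And>i c'. real (card {p\<in>P. u i \<bullet> p \<le> c'}) > \<alpha> \<Longrightarrow> c i \<le> c'"
    by metis
  define B where "B i = {p\<in>P. \<not> u i \<bullet> p \<le> c i}" for i
  have Bc: "real (card (B i)) < real n / real k" for i
  proof -
    have eqP: "B i \<union> {p\<in>P. u i \<bullet> p \<le> c i} = P" unfolding B_def by auto
    have "card (B i \<union> {p\<in>P. u i \<bullet> p \<le> c i}) = card (B i) + card {p\<in>P. u i \<bullet> p \<le> c i}"
      by (rule card_Un_disjoint) (use Pfin in \<open>auto simp: B_def\<close>)
    hence "card (B i) + card {p\<in>P. u i \<bullet> p \<le> c i} = card P" using eqP by simp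
    hence "real (card (B i)) = real n - real (card {p\<in>P. u i \<bullet> p \<le> c i})"
      using Pcard by simp
    also have "\<dots> < real n - \<alpha>" using c(1)[of i] by simp
    also have "\<dots> = real n / real k" unfolding \<alpha>_def using False
      by (simp add: field_simps)
    finally show ?thesis .
  qed
  have "real (card (\<Union>i\<in>{..<k}. B i)) \<le> real (\<Sum>i<k. card (B i))"
    using card_UN_le[of "{..<k}" B] by (simp only: of_nat_le_iff finite_lessThan)
  also have "\<dots> = (\<Sum>i<k. real (card (B i)))" by simp
  also have "\<dots> < (\<Sum>i<k. real n / real k)"
    using Bc False by (intro sum_strict_mono) auto
  also have "\<dots> = real n" using False by simp
  finally have "card (\<Union>i\<in>{..<k}. B i) < card P" using Pcard by simp
  moreover have "finite (\<Union>i\<in>{..<k}. B i)" unfolding B_def using Pfin by simp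
  ultimately have "\<not> P \<subseteq> (\<Union>i\<in>{..<k}. B i)"
    using card_mono[of "\<Union>i\<in>{..<k}. B i" P] by (meson card_mono not_le)
  then obtain p where p: "p \<in> P" "\<And>i. i < k \<Longrightarrow> u i \<bullet> p \<le> c i"
    unfolding B_def by auto
  show ?thesis
  proof (intro bexI[OF _ p(1)] allI impI)
    fix lam t assume h: "lam > 0 \<and> real (card (homothet lam t Q \<inter> P)) > (1 - 1 / real k) * real n"
    have le: "u i \<bullet> p \<le> lam * b i + u i \<bullet> t" if i: "i < k" for i
    proof -
      have sub: "homothet lam t Q \<inter> P \<subseteq> {q\<in>P. u i \<bullet> q \<le> lam * b i + u i \<bullet> t}"
      proof
        fix y assume "y \<in> homothet lam t Q \<inter> P"
        then obtain x where x: "x \<in> Q" "y = lam *\<^sub>R x + t" "y \<in> P"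
          unfolding homothet_def by auto
        have "u i \<bullet> x \<le> b i" using x(1) Qeq i by auto
        hence "lam * (u i \<bullet> x) \<le> lam * b i" using h by simp
        thus "y \<in> {q\<in>P. u i \<bullet> q \<le> lam * b i + u i \<bullet> t}"
          using x by (simp add: inner_add_right)
      qed
      have "real (card (homothet lam t Q \<inter> P)) \<le> real (card {q\<in>P. u i \<bullet> q \<le> lam * b i + u i \<bullet> t})"
        using card_mono[OF _ sub] Pfin by simp
      hence "c i \<le> lam * b i + u i \<bullet> t" using h c(2) unfolding \<alpha>_def by force
      thus ?thesis using p(2)[OF i] by simp
    qed
    define x where "x = (1 / lam) *\<^sub>R (p - t)"
    have px: "p = lam *\<^sub>R x + t" unfolding x_def using h by simp
    have "x \<in> Q" unfolding Qeq
    proof (intro INT_I CollectI)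
      fix i assume "i \<in> {..<k}"
      hence "i < k" by simp
      from le[OF this] have "lam * (u i \<bullet> x) \<le> lam * b i"
        using px by (simp add: inner_add_right)
      thus "u i \<bullet> x \<le> b i" using h by simp
    qed
    thus "p \<in> homothet lam t Q" unfolding homothet_def using px by blast
  qed
qed

end
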